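(* In the odd setting below, the determinant $D_k=\det N_k=\det(F^{(k)}_0,F^{(k)}_1,\dots,F^{(k)}_{2s})$ is invariant under the scaling, i.e. it is homogeneous of degree $0$.
   Context: Odd setting: integers $n\ge1$, $s\ge1$, $m=2s+1$; $a_k^0,\dots,a_k^{2s}$ are $n\times n$ matrices with indeterminate entries, $N$-periodic in $k$. $Q_k$ is the $mn\times mn$ block matrix with $I_n$ in blocks $(i+1,i)$, last block column $(a_k^0;\dots;a_k^{2s})$, $O_n$ elsewhere. $r_k=(a_k^0;O_n;a_k^2;O_n;\dots;O_n;a_k^{2s})$. $F^{(k)}_0=r_k$, $F^{(k)}_\ell=Q_k\cdots Q_{k+\ell-1}r_{k+\ell}$, $N_k=(F^{(k)}_0,\dots,F^{(k)}_{2s})$. The scaling, for $\mu>0$: $a_j^{2r+1}\mapsto\mu^{-1+r/s}a_j^{2r+1}$ ($r=0,\dots,s-1$) and $a_j^{2r}\mapsto\mu^{r/s}a_j^{2r}$ ($r=0,\dots,s$), for all $j$. A function of the entries is homogeneous of degree $d\in\mathbb Q$ if the scaling multiplies it by $\mu^d$ for all $\mu>0$. *)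

theory Defs
  imports "Jordan_Normal_Form.Determinant"
begin

text \<open>Coefficient data: a k i p q is the (p,q) entry (0-based) of the n x n
  matrix a_k^i, for period index k and i = 0..2s.  Entries are arbitrary reals
  (indeterminates are modelled by universally quantified real values).\<close>

type_synonym coeffs = "nat \<Rightarrow> nat \<Rightarrow> nat \<Rightarrow> nat \<Rightarrow> real"

text \<open>Block matrix Q_k of size (m n) x (m n), m = 2s+1: identity blocks at
  block positions (i+1,i), last block column (a_k^0; ...; a_k^{2s}).\<close>
definition Qmat :: "nat \<Rightarrow> nat \<Rightarrow> coeffs \<Rightarrow> nat \<Rightarrow> real mat" where
  "Qmat n s a k = (let m = 2*s+1 in
     mat (m*n) (m*n) (\<lambda>(i,j).
       if j div n = m - 1 then a k (i div n) (i mod n) (j mod n)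
       else if i div n = j div n + 1 \<and> i mod n = j mod n then 1 else 0))"

definition rmat :: "nat \<Rightarrow> nat \<Rightarrow> coeffs \<Rightarrow> nat \<Rightarrow> real mat" where
  "rmat n s a k = (let m = 2*s+1 in
     mat (m*n) n (\<lambda>(i,q). if even (i div n) then a k (i div n) (i mod n) q else 0))"

fun Qprod :: "nat \<Rightarrow> nat \<Rightarrow> coeffs \<Rightarrow> nat \<Rightarrow> nat \<Rightarrow> real mat" where
  "Qprod n s a k 0 = 1\<^sub>m ((2*s+1)*n)"
| "Qprod n s a k (Suc l) = Qprod n s a k l * Qmat n s a (k + l)"

definition Fmat :: "nat \<Rightarrow> nat \<Rightarrow> coeffs \<Rightarrow> nat \<Rightarrow> nat \<Rightarrow> real mat" where
  "Fmat n s a k l = Qprod n s a k l * rmat n s a (k + l)"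

definition Nmat :: "nat \<Rightarrow> nat \<Rightarrow> coeffs \<Rightarrow> nat \<Rightarrow> real mat" where
  "Nmat n s a k = (let m = 2*s+1 in
     mat (m*n) (m*n) (\<lambda>(i,j). Fmat n s a k (j div n) $$ (i, j mod n)))"

definition Dk :: "nat \<Rightarrow> nat \<Rightarrow> coeffs \<Rightarrow> nat \<Rightarrow> real" where
  "Dk n s a k = det (Nmat n s a k)"

definition scale :: "nat \<Rightarrow> real \<Rightarrow> coeffs \<Rightarrow> coeffs" where
  "scale s \<mu> a = (\<lambda>k i p q.
     (if even i then \<mu> powr (real (i div 2) / real s)
      else \<mu> powr (-1 + real (i div 2) / real s)) * a k i p q)"

end

theory Submission
  imports Defs
begin

lemma Qmat_carrier[simp]: "Qmat n s a k \<in> carrier_mat ((2*s+1)*n) ((2*s+1)*n)"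
  by (simp add: Qmat_def Let_def)
lemma rmat_carrier[simp]: "rmat n s a k \<in> carrier_mat ((2*s+1)*n) n"
  by (simp add: rmat_def Let_def)
lemma Qprod_carrier[simp]: "Qprod n s a k l \<in> carrier_mat ((2*s+1)*n) ((2*s+1)*n)"
proof (induction l)
  case (Suc l) then show ?case using mult_carrier_mat[OF Suc Qmat_carrier] by simp
qed simp
lemma Nmat_carrier[simp]: "Nmat n s a k \<in> carrier_mat ((2*s+1)*n) ((2*s+1)*n)"
  by (simp add: Nmat_def Let_def)

definition diagm :: "nat \<Rightarrow> (nat \<Rightarrow> real) \<Rightarrow> real mat" where
  "diagm N d = mat N N (\<lambda>(i,j). if i = j then d i else 0)"

lemma diagm_carrier[simp]: "diagm N d \<in> carrier_mat N N"
  by (simp add: diagm_def)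

lemma sum_delta_gen: "finite A \<Longrightarrow> (\<Sum>x\<in>A. (f x::real) * (if x = c then g x else 0)) = (if c \<in> A then f c * g c else 0)"
proof -
  assume "finite A"
  have "(\<Sum>x\<in>A. f x * (if x = c then g x else 0)) = (\<Sum>x\<in>A. if x = c then f c * g c else 0)"
    by (rule sum.cong) auto
  then show ?thesis using \<open>finite A\<close> by (simp add: sum.delta)
qed

lemma mult_diagm_right:
  assumes "A \<in> carrier_mat r N" "i < r" "j < N"
  shows "(A * diagm N d) $$ (i,j) = A $$ (i,j) * d j"
proof -
  have "(A * diagm N d) $$ (i,j) = (\<Sum>x\<in>{0..<N}. A $$ (i,x) * (if x = j then d x else 0))"
    using assms by (simp add: scalar_prod_def diagm_def)
  also have "\<dots> = A $$ (i,j) * d j" using assms(3) by (subst sum_delta_gen) auto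
  finally show ?thesis .
qed

lemma mult_diagm_left:
  assumes "A \<in> carrier_mat N c" "i < N" "j < c"
  shows "(diagm N d * A) $$ (i,j) = d i * A $$ (i,j)"
proof -
  have "(diagm N d * A) $$ (i,j) = (\<Sum>x\<in>{0..<N}. A $$ (x,j) * (if x = i then d x else 0))"
    using assms by (auto simp: scalar_prod_def diagm_def mult.commute intro!: sum.cong)
  also have "\<dots> = d i * A $$ (i,j)" using assms(2) by (subst sum_delta_gen) auto
  finally show ?thesis .
qed

definition evsc :: "real \<Rightarrow> coeffs \<Rightarrow> coeffs" where
  "evsc lam a = (\<lambda>k i p q. (if even i then lam else 1) * a k i p q)"

definition Dd :: "nat \<Rightarrow> nat \<Rightarrow> real \<Rightarrow> real mat" where
  "Dd n s t = diagm ((2*s+1)*n) (\<lambda>i. t powr real (i div n))"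

lemma Dd_carrier[simp]: "Dd n s t \<in> carrier_mat ((2*s+1)*n) ((2*s+1)*n)"
  by (simp add: Dd_def)

lemma dims[simp]:
  "dim_row (Dd n s t) = (2*s+1)*n" "dim_col (Dd n s t) = (2*s+1)*n"
  "dim_row (Qmat n s a k) = (2*s+1)*n" "dim_col (Qmat n s a k) = (2*s+1)*n"
  "dim_row (Qprod n s a k l) = (2*s+1)*n" "dim_col (Qprod n s a k l) = (2*s+1)*n"
  "dim_row (Nmat n s a k) = (2*s+1)*n" "dim_col (Nmat n s a k) = (2*s+1)*n"
  "dim_row (rmat n s a k) = (2*s+1)*n" "dim_col (rmat n s a k) = n"
  using Dd_carrier Qmat_carrier Qprod_carrier Nmat_carrier rmat_carrier
  by (metis carrier_matD)+

lemma scale_factor: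
  assumes "\<mu> > 0" "s \<ge> 1" "t = \<mu> powr (1/(2*s))"
  shows "scale s \<mu> a k i p q = t powr (if even i then real i else real i - real (2*s+1)) * a k i p q"
proof -
  have tp: "t powr x = \<mu> powr (x / (2*s))" for x
    using assms by (simp add: powr_powr)
  show ?thesis
  proof (cases "even i")
    case True
    then obtain r where "i = 2*r" by blast
    have s0: "real s > 0" using assms by simp
    from \<open>i = 2*r\<close> show ?thesis using True s0 by (simp add: scale_def tp)
  next
    case False
    then obtain r where "i = 2*r+1" using oddE by blast
    have s0: "real s > 0" using assms by simp
    have e: "-1 + real (i div 2) / real s = (real i - real (2*s+1)) / (2 * real s)"
      using s0 \<open>i = 2*r+1\<close> by (simp add: field_simps)
    have e2: "\<mu> powr (-1 + real (i div 2) / real s) = \<mu> powr ((real i - real (2*s+1)) / (2*real s))"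
      using e by simp
    show ?thesis using False unfolding scale_def tp e by simp
  qed
qed

lemma lemA:
  assumes "\<mu> > 0" "s \<ge> 1" "t = \<mu> powr (1/(2*s))"
  shows "Qmat n s (scale s \<mu> a) k * Dd n s t
     = (t powr -1) \<cdot>\<^sub>m (Dd n s t * Qmat n s (evsc (t powr real (2*s+1)) a) k)"
proof (rule eq_matI)
  fix i j assume ij: "i < dim_row (t powr -1 \<cdot>\<^sub>m (Dd n s t * Qmat n s (evsc (t powr real (2*s+1)) a) k))"
    "j < dim_col (t powr -1 \<cdot>\<^sub>m (Dd n s t * Qmat n s (evsc (t powr real (2*s+1)) a) k))"
  then have i: "i < (2*s+1)*n" and j: "j < (2*s+1)*n" by (auto simp: Dd_def diagm_def Qmat_def Let_def)
  have t0: "t > 0" using assms by simp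
  have ib: "i div n < 2*s+1" and jb: "j div n < 2*s+1" using i j
    by (simp_all add: less_mult_imp_div_less mult.commute)
  have L: "(Qmat n s (scale s \<mu> a) k * Dd n s t) $$ (i,j) = Qmat n s (scale s \<mu> a) k $$ (i,j) * t powr real (j div n)"
    unfolding Dd_def by (rule mult_diagm_right[OF Qmat_carrier i j])
  have R: "(Dd n s t * Qmat n s (evsc (t powr real (2*s+1)) a) k) $$ (i,j) = t powr real (i div n) * Qmat n s (evsc (t powr real (2*s+1)) a) k $$ (i,j)"
    unfolding Dd_def by (rule mult_diagm_left[OF Qmat_carrier i j])
  have R2: "(t powr -1 \<cdot>\<^sub>m (Dd n s t * Qmat n s (evsc (t powr real (2*s+1)) a) k)) $$ (i,j)
     = t powr -1 * (t powr real (i div n) * Qmat n s (evsc (t powr real (2*s+1)) a) k $$ (i,j))"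
    using R i j by simp
  show "(Qmat n s (scale s \<mu> a) k * Dd n s t) $$ (i,j) = (t powr -1 \<cdot>\<^sub>m (Dd n s t * Qmat n s (evsc (t powr real (2*s+1)) a) k)) $$ (i,j)"
    unfolding L R2 using i j
    apply (simp add: Qmat_def scale_factor[OF assms] evsc_def)
    using ib t0 by (auto simp: powr_add powr_diff field_simps)
qed (auto simp: Dd_def diagm_def)

lemma smult_smult_m: "(x::real) \<cdot>\<^sub>m (y \<cdot>\<^sub>m A) = (x*y) \<cdot>\<^sub>m A"
  by (rule eq_matI) auto
lemma one_smult_m[simp]: "(1::real) \<cdot>\<^sub>m A = A"
  by (rule eq_matI) auto

lemma lemB:
  assumes "\<mu> > 0" "s \<ge> 1" "t = \<mu> powr (1/(2*s))"
  shows "rmat n s (scale s \<mu> a) k = Dd n s t * rmat n s a k"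
proof (rule eq_matI)
  fix i j assume ij: "i < dim_row (Dd n s t * rmat n s a k)" "j < dim_col (Dd n s t * rmat n s a k)"
  then have i: "i < (2*s+1)*n" and j: "j < n" by auto
  have R: "(Dd n s t * rmat n s a k) $$ (i,j) = t powr real (i div n) * rmat n s a k $$ (i,j)"
    unfolding Dd_def by (rule mult_diagm_left[OF rmat_carrier i j])
  show "rmat n s (scale s \<mu> a) k $$ (i,j) = (Dd n s t * rmat n s a k) $$ (i,j)"
    unfolding R using i j by (simp add: rmat_def scale_factor[OF assms])
qed (auto simp: rmat_def)

lemma lemC:
  assumes "\<mu> > 0" "s \<ge> 1" "t = \<mu> powr (1/(2*s))"
  shows "Qprod n s (scale s \<mu> a) k l * Dd n s t
     = (t powr (- real l)) \<cdot>\<^sub>m (Dd n s t * Qprod n s (evsc (t powr real (2*s+1)) a) k l)"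
proof (induction l)
  case 0
  have "t > 0" using assms by simp
  then show ?case by simp
next
  case (Suc l)
  let ?M = "(2*s+1)*n"
  let ?P = "Qprod n s (scale s \<mu> a) k l"
  let ?P2 = "Qprod n s (evsc (t powr real (2*s+1)) a) k l"
  let ?Q = "Qmat n s (scale s \<mu> a) (k+l)"
  let ?Q2 = "Qmat n s (evsc (t powr real (2*s+1)) a) (k+l)"
  let ?D = "Dd n s t"
  have "Qprod n s (scale s \<mu> a) k (Suc l) * ?D = ?P * (?Q * ?D)"
    by (simp add: assoc_mult_mat[OF Qprod_carrier Qmat_carrier Dd_carrier])
  also have "\<dots> = ?P * ((t powr -1) \<cdot>\<^sub>m (?D * ?Q2))"
    by (simp add: lemA[OF assms])
  also have "\<dots> = (t powr -1) \<cdot>\<^sub>m ((?P * ?D) * ?Q2)"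
    by (simp only: mult_smult_distrib[OF Qprod_carrier mult_carrier_mat[OF Dd_carrier Qmat_carrier]]
        assoc_mult_mat[OF Qprod_carrier Dd_carrier Qmat_carrier])
  also have "\<dots> = (t powr -1) \<cdot>\<^sub>m ((t powr (- real l)) \<cdot>\<^sub>m (?D * ?P2) * ?Q2)"
    by (simp add: Suc.IH)
  also have "\<dots> = (t powr -1 * t powr (- real l)) \<cdot>\<^sub>m (?D * (?P2 * ?Q2))"
    by (simp only: mult_smult_assoc_mat[OF mult_carrier_mat[OF Dd_carrier Qprod_carrier] Qmat_carrier]
        assoc_mult_mat[OF Dd_carrier Qprod_carrier Qmat_carrier] smult_smult_m)
  also have "\<dots> = (t powr (- real (Suc l))) \<cdot>\<^sub>m (?D * Qprod n s (evsc (t powr real (2*s+1)) a) k (Suc l))"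
  proof -
    have e: "t powr -1 * t powr (- real l) = t powr (- real (Suc l))"
    proof -
      have "- real (Suc l) = -1 + - real l" by simp
      then show ?thesis by (simp only: powr_add)
    qed
    show ?thesis unfolding e by simp
  qed
  finally show ?case .
qed

definition Emat :: "nat \<Rightarrow> nat \<Rightarrow> real mat" where
  "Emat n s = mat n ((2*s+1)*n) (\<lambda>(p,j). if p = j mod n then (if j div n = 2*s then 1 else 0) else 0)"

definition Zm :: "nat \<Rightarrow> nat \<Rightarrow> nat \<Rightarrow> real mat" where
  "Zm n s l = mat ((2*s+1)*n) ((2*s+1)*n) (\<lambda>(i,j). if i = l*n + j mod n then (if j div n = 2*s then 1 else 0) else 0)"

lemma Emat_carrier[simp]: "Emat n s \<in> carrier_mat n ((2*s+1)*n)" by (simp add: Emat_def)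
lemma Zm_carrier[simp]: "Zm n s l \<in> carrier_mat ((2*s+1)*n) ((2*s+1)*n)" by (simp add: Zm_def)
lemma Fmat_carrier[simp]: "Fmat n s a k l \<in> carrier_mat ((2*s+1)*n) n"
  unfolding Fmat_def by (rule mult_carrier_mat[OF Qprod_carrier rmat_carrier])

lemma dims2[simp]:
  "dim_row (Fmat n s a k l) = (2*s+1)*n" "dim_col (Fmat n s a k l) = n"
  "dim_row (Emat n s) = n" "dim_col (Emat n s) = (2*s+1)*n"
  "dim_row (Zm n s l) = (2*s+1)*n" "dim_col (Zm n s l) = (2*s+1)*n"
  using Fmat_carrier Emat_carrier Zm_carrier by (metis carrier_matD)+

lemma times_Emat:
  assumes "A \<in> carrier_mat r n" "x < r" "j < (2*s+1)*n"
  shows "(A * Emat n s) $$ (x,j) = (if j div n = 2*s then A $$ (x, j mod n) else 0)"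
proof -
  have n0: "n > 0" using assms(3) by (cases n) auto
  have "(A * Emat n s) $$ (x,j) = (\<Sum>p\<in>{0..<n}. A $$ (x,p) * (if p = j mod n then (if j div n = 2*s then 1 else 0) else 0))"
    using assms by (simp add: scalar_prod_def Emat_def)
  also have "\<dots> = (if j div n = 2*s then A $$ (x, j mod n) else 0)"
    using n0 by (subst sum_delta_gen) auto
  finally show ?thesis .
qed

lemma Qmat_evsc:
  "Qmat n s (evsc lam a) k = Qmat n s a k + (lam - 1) \<cdot>\<^sub>m (rmat n s a k * Emat n s)"
proof (rule eq_matI)
  fix i j assume ij: "i < dim_row (Qmat n s a k + (lam - 1) \<cdot>\<^sub>m (rmat n s a k * Emat n s))"
    "j < dim_col (Qmat n s a k + (lam - 1) \<cdot>\<^sub>m (rmat n s a k * Emat n s))"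
  then have i: "i < (2*s+1)*n" and j: "j < (2*s+1)*n" by (auto simp: Emat_def)
  have n0: "n > 0" using i by (cases n) auto
  have T: "(rmat n s a k * Emat n s) $$ (i,j) = (if j div n = 2*s then rmat n s a k $$ (i, j mod n) else 0)"
    by (rule times_Emat[OF rmat_carrier i j])
  show "Qmat n s (evsc lam a) k $$ (i,j) = (Qmat n s a k + (lam - 1) \<cdot>\<^sub>m (rmat n s a k * Emat n s)) $$ (i,j)"
    using i j n0 T by (auto simp: Qmat_def rmat_def evsc_def Emat_def algebra_simps)
qed (auto simp: Emat_def)

lemma FE:
  assumes "l \<le> 2*s"
  shows "Fmat n s a k l * Emat n s = Nmat n s a k * Zm n s l"
proof (rule eq_matI)
  fix x j assume ij: "x < dim_row (Nmat n s a k * Zm n s l)" "j < dim_col (Nmat n s a k * Zm n s l)"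
  then have x: "x < (2*s+1)*n" and j: "j < (2*s+1)*n" by (auto simp: Zm_def)
  have n0: "n > 0" using x by (cases n) auto
  have q: "j mod n < n" using n0 by simp
  have lq: "l*n + j mod n < (2*s+1)*n"
  proof -
    have "l*n + j mod n < l*n + n" using q by simp
    also have "\<dots> = (l+1)*n" by simp
    also have "\<dots> \<le> (2*s+1)*n" using assms by (intro mult_right_mono) auto
    finally show ?thesis .
  qed
  have dv: "(l*n + j mod n) div n = l" "(l*n + j mod n) mod n = j mod n" using q n0 by auto
  have "(Nmat n s a k * Zm n s l) $$ (x,j) = (\<Sum>i\<in>{0..<(2*s+1)*n}. Nmat n s a k $$ (x,i) * (if i = l*n + j mod n then (if j div n = 2*s then 1 else 0) else 0))"
    using x j by (simp add: scalar_prod_def Zm_def)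
  also have "\<dots> = Nmat n s a k $$ (x, l*n + j mod n) * (if j div n = 2*s then 1 else 0)"
    using lq by (subst sum_delta_gen) auto
  also have "\<dots> = (if j div n = 2*s then Fmat n s a k l $$ (x, j mod n) else 0)"
    using x lq dv by (simp add: Nmat_def)
  finally show "(Fmat n s a k l * Emat n s) $$ (x,j) = (Nmat n s a k * Zm n s l) $$ (x,j)"
    using times_Emat[OF Fmat_carrier x j] by simp
qed (auto simp: Zm_def Emat_def)

definition zrows :: "nat \<Rightarrow> nat \<Rightarrow> nat \<Rightarrow> real mat \<Rightarrow> bool" where
  "zrows n s l C = (\<forall>i j. i < (2*s+1)*n \<longrightarrow> j < dim_col C \<longrightarrow> l \<le> i div n \<longrightarrow> C $$ (i,j) = 0)"

lemma zrows_mult: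
  assumes "C \<in> carrier_mat ((2*s+1)*n) ((2*s+1)*n)" "B \<in> carrier_mat ((2*s+1)*n) c" "zrows n s l C"
  shows "zrows n s l (C * B)"
  unfolding zrows_def
proof (intro allI impI)
  fix i j assume h: "i < (2*s+1)*n" "j < dim_col (C*B)" "l \<le> i div n"
  have "(C*B) $$ (i,j) = (\<Sum>x\<in>{0..<(2*s+1)*n}. C $$ (i,x) * B $$ (x,j))"
    using h assms by (simp add: scalar_prod_def)
  also have "\<dots> = 0" using assms(1,3) h unfolding zrows_def by (intro sum.neutral) auto
  finally show "(C*B) $$ (i,j) = 0" .
qed

lemma zrows_mono: "zrows n s l C \<Longrightarrow> l \<le> l' \<Longrightarrow> zrows n s l' C"
  unfolding zrows_def by auto

lemma inv_lemma:
  assumes "l \<le> 2*s"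
  shows "\<exists>C \<in> carrier_mat ((2*s+1)*n) ((2*s+1)*n). zrows n s l C \<and>
     Qprod n s (evsc lam a) k l = Qprod n s a k l + Nmat n s a k * C"
  using assms
proof (induction l)
  case 0
  show ?case
    by (rule bexI[of _ "0\<^sub>m ((2*s+1)*n) ((2*s+1)*n)"]) (auto simp: zrows_def)
next
  case (Suc l)
  let ?M = "(2*s+1)*n"
  from Suc obtain C where C: "C \<in> carrier_mat ?M ?M" "zrows n s l C"
    and eq: "Qprod n s (evsc lam a) k l = Qprod n s a k l + Nmat n s a k * C" by auto
  let ?P = "Qprod n s a k l"
  let ?Q = "Qmat n s a (k+l)"
  let ?r = "rmat n s a (k+l)"
  let ?X = "?r * Emat n s"
  let ?N = "Nmat n s a k"
  let ?Z = "Zm n s l"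
  let ?c = "lam - 1"
  have X: "?X \<in> carrier_mat ?M ?M" by (rule mult_carrier_mat[OF rmat_carrier Emat_carrier])
  have PX: "?P * ?X = ?N * ?Z"
    using FE[of l s n a k] Suc.prems
    by (simp add: Fmat_def assoc_mult_mat[OF Qprod_carrier rmat_carrier Emat_carrier, symmetric])
  define C' where "C' = C * ?Q + (?c \<cdot>\<^sub>m ?Z + ?c \<cdot>\<^sub>m (C * ?X))"
  have C'c: "C' \<in> carrier_mat ?M ?M" unfolding C'_def using C X by auto
  have zr: "zrows n s (Suc l) C'"
    unfolding zrows_def
  proof (intro allI impI)
    fix i j assume h: "i < ?M" "j < dim_col C'" "Suc l \<le> i div n"
    have j: "j < ?M" using h C'c by auto
    have z1: "(C * ?Q) $$ (i,j) = 0"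
      using zrows_mult[OF C(1) Qmat_carrier C(2)] h j unfolding zrows_def by auto
    have z2: "(C * ?X) $$ (i,j) = 0"
      using zrows_mult[OF C(1) X C(2)] h j X unfolding zrows_def by auto
    have n0: "n > 0" using h by (cases n) auto
    have z3: "?Z $$ (i,j) = 0"
    proof -
      have "i \<noteq> l*n + j mod n"
      proof
        assume "i = l*n + j mod n"
        then have "i div n = l" using n0 by simp
        then show False using h by simp
      qed
      then show ?thesis using h j by (simp add: Zm_def)
    qed
    show "C' $$ (i,j) = 0" unfolding C'_def using h j z1 z2 z3 X C by simp
  qed
  have "Qprod n s (evsc lam a) k (Suc l) = (?P + ?N * C) * (?Q + ?c \<cdot>\<^sub>m ?X)"
    by (simp add: eq Qmat_evsc)
  also have "\<dots> = (?P + ?N * C) * ?Q + (?P + ?N * C) * (?c \<cdot>\<^sub>m ?X)"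
    by (rule mult_add_distrib_mat[where nr="?M" and n="?M" and nc="?M"]) (use C X in auto)
  also have "\<dots> = (?P * ?Q + ?N * (C * ?Q)) + ?c \<cdot>\<^sub>m (?P * ?X + ?N * (C * ?X))"
  proof -
    have NC: "?N * C \<in> carrier_mat ?M ?M" by (rule mult_carrier_mat[OF Nmat_carrier C(1)])
    have h1: "(?P + ?N * C) * ?Q = ?P * ?Q + ?N * (C * ?Q)"
      using add_mult_distrib_mat[OF Qprod_carrier NC Qmat_carrier]
        assoc_mult_mat[OF Nmat_carrier C(1) Qmat_carrier] by simp
    have h2: "(?P + ?N * C) * (?c \<cdot>\<^sub>m ?X) = ?c \<cdot>\<^sub>m (?P * ?X + ?N * (C * ?X))"
      using mult_smult_distrib[OF add_carrier_mat[OF NC] X, of ?P] add_mult_distrib_mat[OF Qprod_carrier NC X]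
        assoc_mult_mat[OF Nmat_carrier C(1) X] by simp
    show ?thesis using h1 h2 by simp
  qed
  also have "\<dots> = (?P * ?Q + ?N * (C * ?Q)) + (?c \<cdot>\<^sub>m (?N * ?Z) + ?c \<cdot>\<^sub>m (?N * (C * ?X)))"
    unfolding PX using add_smult_distrib_left_mat[OF mult_carrier_mat[OF Nmat_carrier Zm_carrier]
      mult_carrier_mat[OF Nmat_carrier mult_carrier_mat[OF C(1) X]], of ?c] by simp
  also have "\<dots> = ?P * ?Q + ?N * C'"
  proof -
    have CQ: "C * ?Q \<in> carrier_mat ?M ?M" by (rule mult_carrier_mat[OF C(1) Qmat_carrier])
    have CX: "C * ?X \<in> carrier_mat ?M ?M" by (rule mult_carrier_mat[OF C(1) X])
    have cZ: "?c \<cdot>\<^sub>m ?Z \<in> carrier_mat ?M ?M" by (rule smult_carrier_mat[OF Zm_carrier])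
    have cCX: "?c \<cdot>\<^sub>m (C * ?X) \<in> carrier_mat ?M ?M" by (rule smult_carrier_mat[OF CX])
    have "?N * C' = ?N * (C * ?Q) + (?N * (?c \<cdot>\<^sub>m ?Z) + ?N * (?c \<cdot>\<^sub>m (C * ?X)))"
      unfolding C'_def using mult_add_distrib_mat[OF Nmat_carrier CQ add_carrier_mat[OF cCX]]
        mult_add_distrib_mat[OF Nmat_carrier cZ cCX] by simp
    also have "\<dots> = ?N * (C * ?Q) + (?c \<cdot>\<^sub>m (?N * ?Z) + ?c \<cdot>\<^sub>m (?N * (C * ?X)))"
      using mult_smult_distrib[OF Nmat_carrier Zm_carrier] mult_smult_distrib[OF Nmat_carrier CX] by simp
    finally have e: "?N * C' = \<dots>" .
    show ?thesis unfolding e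
      by (rule assoc_add_mat[OF mult_carrier_mat[OF Qprod_carrier Qmat_carrier]
         mult_carrier_mat[OF Nmat_carrier CQ]
         add_carrier_mat[OF smult_carrier_mat[OF mult_carrier_mat[OF Nmat_carrier CX]]]])
  qed
  finally show ?case using C'c zr by auto
qed

lemma prod_diag:
  assumes "A \<in> carrier_mat m m"
  shows "prod_list (diag_mat A) = (\<Prod>i\<in>{0..<m}. A $$ (i,i))"
proof -
  have "prod (\<lambda>i. A $$ (i,i)) (set [0..<m]) = prod_list (map (\<lambda>i. A $$ (i,i)) [0..<m])"
    by (rule prod.distinct_set_conv_list) simp
  then show ?thesis using assms by (simp add: diag_mat_def)
qed

theorem mainTheorem7:
  fixes n s Np :: nat and a :: coeffs and \<mu> :: real and k :: nat
  assumes "n \<ge> 1" and "s \<ge> 1" and "Np \<ge> 1"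
    and "\<And>j. a (j + Np) = a j"
    and "\<mu> > 0"
  shows "Dk n s (scale s \<mu> a) k = Dk n s a k"
proof -
  define t where "t = \<mu> powr (1/(2*s))"
  have t0: "t > 0" unfolding t_def using assms by simp
  note AS = assms(5) assms(2) t_def
  let ?M = "(2*s+1)*n"
  let ?a2 = "evsc (t powr real (2*s+1)) a"
  let ?a' = "scale s \<mu> a"
  let ?N = "Nmat n s a k"
  let ?D = "Dd n s t"
  have "\<forall>l. \<exists>C. l \<le> 2*s \<longrightarrow> C \<in> carrier_mat ?M ?M \<and> zrows n s l C \<and>
     Qprod n s ?a2 k l = Qprod n s a k l + ?N * C"
    using inv_lemma by blast
  from choice[OF this] obtain Cf where Cf: "\<And>l. l \<le> 2*s \<Longrightarrow> Cf l \<in> carrier_mat ?M ?M \<and> zrows n s l (Cf l) \<and>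
     Qprod n s ?a2 k l = Qprod n s a k l + ?N * Cf l" by blast
  have Fl: "Fmat n s ?a' k l = t powr (- real l) \<cdot>\<^sub>m (?D * (Fmat n s a k l + ?N * (Cf l * rmat n s a (k+l))))"
    if l: "l \<le> 2*s" for l
  proof -
    let ?r = "rmat n s a (k+l)"
    have C: "Cf l \<in> carrier_mat ?M ?M" and eq: "Qprod n s ?a2 k l = Qprod n s a k l + ?N * Cf l"
      using Cf[OF l] by auto
    have "Fmat n s ?a' k l = Qprod n s ?a' k l * (?D * ?r)"
      unfolding Fmat_def lemB[OF AS] ..
    also have "\<dots> = (Qprod n s ?a' k l * ?D) * ?r"
      by (rule assoc_mult_mat[OF Qprod_carrier Dd_carrier rmat_carrier, symmetric])
    also have "\<dots> = (t powr (- real l) \<cdot>\<^sub>m (?D * Qprod n s ?a2 k l)) * ?r"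
      unfolding lemC[OF AS] ..
    also have "\<dots> = t powr (- real l) \<cdot>\<^sub>m (?D * (Qprod n s ?a2 k l * ?r))"
      using mult_smult_assoc_mat[OF mult_carrier_mat[OF Dd_carrier Qprod_carrier] rmat_carrier]
        assoc_mult_mat[OF Dd_carrier Qprod_carrier rmat_carrier] by simp
    also have "Qprod n s ?a2 k l * ?r = Fmat n s a k l + ?N * (Cf l * ?r)"
      unfolding eq Fmat_def
      using add_mult_distrib_mat[OF Qprod_carrier mult_carrier_mat[OF Nmat_carrier C] rmat_carrier]
        assoc_mult_mat[OF Nmat_carrier C rmat_carrier] by simp
    finally show ?thesis .
  qed
  define U where "U = mat ?M ?M (\<lambda>(i,j). t powr (- real (j div n)) *
     ((if i = j then 1 else 0) + (Cf (j div n) * rmat n s a (k + j div n)) $$ (i, j mod n)))"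
  have Uc: "U \<in> carrier_mat ?M ?M" unfolding U_def by simp
  have n0: "n > 0" using assms by simp
  have jb: "j div n \<le> 2*s" if "j < ?M" for j
    using that n0 by (simp add: less_mult_imp_div_less mult.commute less_Suc_eq_le[symmetric])
  have main: "Nmat n s ?a' k = ?D * (?N * U)"
  proof (rule eq_matI)
    fix x j assume h: "x < dim_row (?D * (?N * U))" "j < dim_col (?D * (?N * U))"
    then have x: "x < ?M" and j: "j < ?M" using Uc by auto
    let ?l = "j div n"
    let ?q = "j mod n"
    let ?CR = "Cf ?l * rmat n s a (k + ?l)"
    have C: "Cf ?l \<in> carrier_mat ?M ?M" using Cf[OF jb[OF j]] by auto
    have CR: "?CR \<in> carrier_mat ?M n" by (rule mult_carrier_mat[OF C rmat_carrier])
    have q: "?q < n" using n0 by simp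
    have NU: "(?N * U) $$ (x,j) = t powr (- real ?l) * (?N $$ (x,j) + (?N * ?CR) $$ (x, ?q))"
    proof -
      have "(?N * U) $$ (x,j) = (\<Sum>i\<in>{0..<?M}. ?N $$ (x,i) * U $$ (i,j))"
        using x j Uc by (simp add: scalar_prod_def)
      also have "\<dots> = (\<Sum>i\<in>{0..<?M}. t powr (- real ?l) * (?N $$ (x,i) * (if i = j then 1 else 0))
          + t powr (- real ?l) * (?N $$ (x,i) * ?CR $$ (i, ?q)))"
        using j by (intro sum.cong) (auto simp: U_def algebra_simps)
      also have "\<dots> = t powr (- real ?l) * (\<Sum>i\<in>{0..<?M}. ?N $$ (x,i) * (if i = j then 1 else 0))
          + t powr (- real ?l) * (\<Sum>i\<in>{0..<?M}. ?N $$ (x,i) * ?CR $$ (i, ?q))"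
        by (simp add: sum.distrib sum_distrib_left)
      also have "(\<Sum>i\<in>{0..<?M}. ?N $$ (x,i) * (if i = j then 1 else 0)) = ?N $$ (x,j)"
        using j by (subst sum_delta_gen) auto
      also have "(\<Sum>i\<in>{0..<?M}. ?N $$ (x,i) * ?CR $$ (i, ?q)) = (?N * ?CR) $$ (x, ?q)"
      proof -
        have e: "(?N * ?CR) $$ (x, ?q) = row ?N x \<bullet> col ?CR ?q"
          by (rule index_mult_mat(1)) (use x q CR in auto)
        show ?thesis unfolding e scalar_prod_def using CR x q carrier_matD[OF CR]
          by (intro sum.cong) auto
      qed
      finally show ?thesis by (simp add: algebra_simps)
    qed
    have NC: "?N * ?CR \<in> carrier_mat ?M n" by (rule mult_carrier_mat[OF Nmat_carrier CR])
    have "Nmat n s ?a' k $$ (x,j) = Fmat n s ?a' k ?l $$ (x, ?q)"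
      using x j by (simp add: Nmat_def)
    also have "\<dots> = t powr (- real ?l) * (t powr real (x div n) * (Fmat n s a k ?l + ?N * ?CR) $$ (x, ?q))"
    proof -
      let ?S = "Fmat n s a k ?l + ?N * ?CR"
      have Sc: "?S \<in> carrier_mat ?M n" by (rule add_carrier_mat[OF NC])
      have DS: "?D * ?S \<in> carrier_mat ?M n" by (rule mult_carrier_mat[OF Dd_carrier Sc])
      have e1: "(t powr (- real ?l) \<cdot>\<^sub>m (?D * ?S)) $$ (x, ?q) = t powr (- real ?l) * (?D * ?S) $$ (x, ?q)"
        by (rule index_smult_mat(1)) (use DS x q in auto)
      have e2: "(?D * ?S) $$ (x, ?q) = t powr real (x div n) * ?S $$ (x, ?q)"
        unfolding Dd_def by (rule mult_diagm_left[OF Sc x q])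
      show ?thesis unfolding Fl[OF jb[OF j]] e1 e2 ..
    qed
    also have "\<dots> = t powr (- real ?l) * (t powr real (x div n) * (?N $$ (x,j) + (?N * ?CR) $$ (x, ?q)))"
      using x j q NC by (simp add: Nmat_def)
    also have "\<dots> = (?D * (?N * U)) $$ (x,j)"
      unfolding Dd_def mult_diagm_left[OF mult_carrier_mat[OF Nmat_carrier Uc] x j] NU by simp
    finally show "Nmat n s ?a' k $$ (x,j) = (?D * (?N * U)) $$ (x,j)" .
  qed (use Uc in auto)
  have Uut: "upper_triangular U"
    unfolding upper_triangular_def
  proof (intro allI impI)
    fix i j assume h: "i < dim_row U" "j < i"
    then have i: "i < ?M" and j: "j < ?M" using Uc by auto
    let ?l = "j div n"
    have C: "Cf ?l \<in> carrier_mat ?M ?M" "zrows n s ?l (Cf ?l)" using Cf[OF jb[OF j]] by auto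
    have "?l \<le> i div n" using h by (simp add: div_le_mono)
    then have "(Cf ?l * rmat n s a (k + ?l)) $$ (i, j mod n) = 0"
      using zrows_mult[OF C(1) rmat_carrier C(2)] i n0 unfolding zrows_def by simp
    then show "U $$ (i,j) = 0" using i j h unfolding U_def by simp
  qed
  have Udiag: "U $$ (i,i) = t powr (- real (i div n))" if i: "i < ?M" for i
  proof -
    let ?l = "i div n"
    have C: "Cf ?l \<in> carrier_mat ?M ?M" "zrows n s ?l (Cf ?l)" using Cf[OF jb[OF i]] by auto
    have "(Cf ?l * rmat n s a (k + ?l)) $$ (i, i mod n) = 0"
      using zrows_mult[OF C(1) rmat_carrier C(2)] i n0 unfolding zrows_def by simp
    then show ?thesis using i unfolding U_def by simp
  qed
  have dD: "det ?D = (\<Prod>i\<in>{0..<?M}. t powr real (i div n))"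
    using det_upper_triangular[OF _ Dd_carrier] prod_diag[OF Dd_carrier]
    by (simp add: upper_triangular_def Dd_def diagm_def)
  have dU: "det U = (\<Prod>i\<in>{0..<?M}. t powr (- real (i div n)))"
    using det_upper_triangular[OF Uut Uc] prod_diag[OF Uc] Udiag by simp
  have "det ?D * det U = 1"
    unfolding dD dU prod.distrib[symmetric]
    by (rule prod.neutral) (use t0 in \<open>simp add: powr_add[symmetric]\<close>)
  have "Dk n s ?a' k = det ?D * (det ?N * det U)"
    unfolding Dk_def main
    using det_mult[OF Dd_carrier mult_carrier_mat[OF Nmat_carrier Uc]] det_mult[OF Nmat_carrier Uc] by simp
  also have "\<dots> = det ?N * (det ?D * det U)" by simp
  also have "\<dots> = Dk n s a k" using \<open>det ?D * det U = 1\<close> by (simp add: Dk_def)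
  finally show ?thesis .
qed

end
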